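(* For every simplicial complex $\Delta$ on a finite vertex set $[m]$ one has $f_d(\mathrm{Inc}(\Delta))\ge\mathrm{Inc}^{[d+1]}(f_d(\Delta))$ for all $d\ge0$.
   Context: $\mathbb{N}=\{1,2,3,\dots\}$, $[m]=\{1,\dots,m\}$. A simplicial complex on $[m]$ is a collection of subsets of $[m]$ closed under taking subsets. For $d\ge1$, $F_d(\Delta)$ is the set of $d$-element faces, viewed in $\binom{\mathbb{N}}{d}$ (the $d$-subsets of $\mathbb{N}$, written $\mathbf{u}=(u_1,\dots,u_d)$ with $u_1<\cdots<u_d$), and $f_{d-1}(\Delta)=|F_d(\Delta)|$. $\mathrm{Inc}_1$ is the set of maps $\pi\colon\mathbb{N}\to\mathbb{N}$ with $\pi(j)<\pi(j+1)$ and $\pi(j)\le j+1$ for all $j$, acting by $\pi(\mathbf{u})=(\pi(u_1),\ldots,\pi(u_d))$; $\mathrm{Inc}(\mathcal{F})=\{\pi(\mathbf{u})\mid\mathbf{u}\in\mathcal{F},\pi\in\mathrm{Inc}_1\}$ and $\mathrm{Inc}(\Delta)=\bigcup_{d\ge1}\mathrm{Inc}(F_d(\Delta))$ (together with the empty face). Every positive integer $n$ has a unique $e$-binomial representation $n=\binom{a_e}{e}+\binom{a_{e-1}}{e-1}+\cdots+\binom{a_s}{s}$ with $a_e>a_{e-1}>\cdots>a_s\ge s\ge1$; then $\mathrm{Inc}^{[e]}(n)=\binom{a_e+1}{e}+\binom{a_{e-1}+1}{e-1}+\cdots+\binom{a_s+1}{s}$, and $\mathrm{Inc}^{[e]}(0)=0$.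 *)

theory Defs
  imports Main
begin

definition simplicial_complex :: "nat \<Rightarrow> nat set set \<Rightarrow> bool" where
  "simplicial_complex m \<Delta> \<longleftrightarrow>
     (\<forall>F\<in>\<Delta>. F \<subseteq> {1..m}) \<and> (\<forall>F\<in>\<Delta>. \<forall>G. G \<subseteq> F \<longrightarrow> G \<in> \<Delta>)"

definition faces :: "nat \<Rightarrow> nat set set \<Rightarrow> nat set set" where
  "faces d \<Delta> = {F \<in> \<Delta>. card F = d}"

text \<open>f_{d-1}(Delta) = |F_d(Delta)|, i.e. fvec d Delta = f_d(Delta) = |F_{d+1}(Delta)|.\<close>
definition fvec :: "nat \<Rightarrow> nat set set \<Rightarrow> nat" where
  "fvec d \<Delta> = card (faces (d + 1) \<Delta>)"

text \<open>Inc_1: maps pi : N -> N (N = {1,2,...}) with pi(j) < pi(j+1) and pi(j) \<le> j+1.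
  Only the values on positive arguments matter.\<close>
definition Inc1 :: "(nat \<Rightarrow> nat) set" where
  "Inc1 = {\<pi>. \<forall>j\<ge>1. 1 \<le> \<pi> j \<and> \<pi> j < \<pi> (Suc j) \<and> \<pi> j \<le> j + 1}"

definition IncF :: "nat set set \<Rightarrow> nat set set" where
  "IncF \<F> = {\<pi> ` u | u \<pi>. u \<in> \<F> \<and> \<pi> \<in> Inc1}"

definition IncCx :: "nat set set \<Rightarrow> nat set set" where
  "IncCx \<Delta> = (\<Union>d\<in>{1..}. IncF (faces d \<Delta>)) \<union> {{}}"

definition binrep :: "nat \<Rightarrow> nat \<Rightarrow> nat \<Rightarrow> (nat \<Rightarrow> nat) \<Rightarrow> bool" where
  "binrep e n s a \<longleftrightarrow> 1 \<le> s \<and> s \<le> e \<and> (\<forall>i\<in>{s..<e}. a i < a (Suc i)) \<and> s \<le> a s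
     \<and> n = (\<Sum>i=s..e. a i choose i)"

definition IncBin :: "nat \<Rightarrow> nat \<Rightarrow> nat" where
  "IncBin e n = (if n = 0 then 0 else
     (THE v. \<exists>s a. binrep e n s a \<and> v = (\<Sum>i=s..e. (a i + 1) choose i)))"

end

theory Submission
  imports Defs
begin


definition btop :: "nat \<Rightarrow> nat \<Rightarrow> nat" where
  "btop e n = (GREATEST a. a choose e \<le> n)"

primrec K :: "nat \<Rightarrow> nat \<Rightarrow> nat" where
  "K 0 n = 0"
| "K (Suc d) n = (if n = 0 then 0 else
      (btop (Suc d) n choose d) + K d (n - (btop (Suc d) n choose Suc d)))"

lemma top_eq:
  assumes "a choose e \<le> n" "n < Suc a choose e"
  shows "btop e n = a"
  unfolding btop_def
proof (rule Greatest_equality)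
  show "a choose e \<le> n" by fact
  fix y assume y: "y choose e \<le> n"
  show "y \<le> a"
  proof (rule ccontr)
    assume "\<not> y \<le> a"
    then have "Suc a \<le> y" by simp
    then have "Suc a choose e \<le> y choose e" by (rule binomial_right_mono)
    with y assms(2) show False by simp
  qed
qed

lemma choose_big: "Suc n \<le> (n + Suc e) choose (Suc e)"
proof (induction e)
  case 0 then show ?case by simp
next
  case (Suc e)
  have "(n + Suc (Suc e)) choose (Suc (Suc e)) = ((n + Suc e) choose (Suc e)) + ((n + Suc e) choose (Suc (Suc e)))"
    by simp
  with Suc show ?case by linarith
qed

lemma top_exists:
  assumes "1 \<le> e"
  shows "\<exists>a. a choose e \<le> n \<and> n < Suc a choose e"
proof -
  obtain e' where e: "e = Suc e'" using assms by (cases e) auto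
  have ex: "\<exists>a. n < a choose e" using choose_big[of n e'] e by (intro exI[of _ "n + e"]) simp
  define a where "a = (LEAST a. n < a choose e)"
  have a1: "n < a choose e" unfolding a_def using ex by (rule LeastI_ex)
  have a0: "a \<noteq> 0" using a1 e by (cases a) auto
  then obtain b where b: "a = Suc b" by (cases a) auto
  have "b < a" using b by simp
  then have "\<not> n < b choose e" unfolding a_def by (rule not_less_Least)
  then have "b choose e \<le> n" by simp
  with a1 b show ?thesis by blast
qed

lemma K_unfold:
  assumes "1 \<le> n" "a choose Suc d \<le> n" "n < Suc a choose Suc d"
  shows "K (Suc d) n = (a choose d) + K d (n - (a choose Suc d))"
  using assms top_eq[OF assms(2,3)] by simp

lemma K_zero[simp]: "K e 0 = 0"
  by (cases e) auto

lemma binom_pos: "e \<le> a \<Longrightarrow> 1 \<le> a choose e"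
  using zero_less_binomial by (simp add: Suc_le_eq)

lemma top_facts:
  assumes "1 \<le> n"
  obtains a where "a choose Suc d \<le> n" "n < Suc a choose Suc d" "Suc d \<le> a"
proof -
  obtain a where a: "a choose Suc d \<le> n" "n < Suc a choose Suc d"
    using top_exists[of "Suc d" n] by auto
  have "Suc d \<le> a"
  proof (rule ccontr)
    assume "\<not> Suc d \<le> a"
    then have "a < d \<or> a = d" by auto
    then have "Suc a choose Suc d \<le> 1" by (auto simp: binomial_eq_0)
    with a assms show False by auto
  qed
  with a that show ?thesis by blast
qed

lemma K_mono_Suc: "K e n \<le> K e (Suc n)"
proof (induction e arbitrary: n)
  case 0 then show ?case by simp
next
  case (Suc d)
  have mono: "K d p \<le> K d q" if "p \<le> q" for p q
    by (rule lift_Suc_mono_le[of "K d", OF Suc.IH that])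
  show ?case
  proof (cases "n = 0")
    case True then show ?thesis by simp
  next
    case False
    then obtain a where a: "a choose Suc d \<le> n" "n < Suc a choose Suc d" "Suc d \<le> a"
      using top_facts[of n d] by auto
    have Kn: "K (Suc d) n = (a choose d) + K d (n - (a choose Suc d))"
      using K_unfold[OF _ a(1,2)] False by simp
    show ?thesis
    proof (cases "Suc n < Suc a choose Suc d")
      case True
      have "K (Suc d) (Suc n) = (a choose d) + K d (Suc n - (a choose Suc d))"
        using K_unfold[OF _ _ True] a by simp
      moreover have "K d (n - (a choose Suc d)) \<le> K d (Suc n - (a choose Suc d))"
        by (rule mono) simp
      ultimately show ?thesis using Kn by simp
    next
      case False
      then have eq: "Suc n = Suc a choose Suc d" using a(2) by simp
      have "Suc a choose Suc d < Suc (Suc a) choose Suc d"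
        using binom_pos[of d "Suc a"] a(3) by simp
      then have K1: "K (Suc d) (Suc n) = (Suc a choose d)"
        using K_unfold[of "Suc n" "Suc a" d] eq by simp
      have r: "n - (a choose Suc d) \<le> a choose d" using eq by simp
      have "K d (n - (a choose Suc d)) \<le> K d (a choose d)" by (rule mono[OF r])
      also have "K d (a choose d) \<le> (Suc a choose d) - (a choose d)"
      proof (cases d)
        case 0 then show ?thesis by simp
      next
        case (Suc d')
        have "1 \<le> a choose d" using binom_pos[of d a] a(3) by simp
        moreover have "a choose d < Suc a choose d"
          using binom_pos[of d' a] a(3) Suc by simp
        ultimately have eqK: "K d (a choose d) = (a choose d')"
          using K_unfold[of "a choose d" a d'] Suc by simp
        have "Suc a choose d = (a choose d') + (a choose d)" using Suc by simp
        with eqK show ?thesis by linarith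
      qed
      finally have "K d (n - (a choose Suc d)) \<le> (Suc a choose d) - (a choose d)" .
      moreover have "a choose d \<le> Suc a choose d" by (rule binomial_right_mono) simp
      ultimately show ?thesis using Kn K1 by linarith
    qed
  qed
qed

lemma K_mono: "p \<le> q \<Longrightarrow> K e p \<le> K e q"
  by (rule lift_Suc_mono_le[of "K e", OF K_mono_Suc])

lemma K_one: "K (Suc 0) m = (if m = 0 then 0 else 1)"
  by simp

lemma L1: "K (Suc d) y \<le> x \<Longrightarrow> K (Suc d) (x + y) \<le> x + K d x"
proof (induction d arbitrary: x y)
  case 0
  then show ?case by (cases "x = 0") (auto simp: K_one split: if_splits)
next
  case (Suc d')
  define d where "d = Suc d'"
  define e where "e = Suc d"
  have hyp: "K e y \<le> x" using Suc.prems by (simp add: e_def d_def)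
  have IH: "\<And>x y. K d y \<le> x \<Longrightarrow> K d (x + y) \<le> x + K d' x"
    using Suc.IH by (simp add: d_def)
  define n where "n = x + y"
  show ?case
  proof (cases "n = 0")
    case True then show ?thesis by (simp add: n_def)
  next
    case False
    then obtain a where a: "a choose e \<le> n" "n < Suc a choose e" "e \<le> a"
      using top_facts[of n d] by (auto simp: e_def)
    have bin1: "Suc a choose e = (a choose d) + (a choose e)" by (simp add: e_def)
    define r where "r = n - (a choose e)"
    have Kn: "K e n = (a choose d) + K d r"
      using K_unfold[of n a d] a False by (simp add: e_def r_def)
    have rlt: "r < a choose d" using a bin1 by (simp add: r_def)
    have goal: "K e n \<le> x + K d x"
    proof (cases "a choose e \<le> y")
      case True
      have "1 \<le> a choose e" using binom_pos a(3) by simp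
      then have y1: "1 \<le> y" using True by simp
      have "y < Suc a choose e" using a(2) by (simp add: n_def)
      then have "K e y = (a choose d) + K d (y - (a choose e))"
        using K_unfold[of y a d] True y1 by (simp add: e_def)
      then have "a choose d \<le> x" using hyp by simp
      moreover have "x \<le> r" using True by (simp add: r_def n_def)
      ultimately show ?thesis using rlt by simp
    next
      case False
      then have xr: "r < x" using a by (simp add: r_def n_def)
      show ?thesis
      proof (cases "a choose d \<le> x")
        case True
        have "K d r \<le> K d x" using xr by (intro K_mono) simp
        then show ?thesis using Kn True by simp
      next
        case xsmall: False
        obtain a' where a': "a = Suc a'" using a(3) by (cases a) (auto simp: e_def)
        have b1: "a choose e = (a' choose d) + (a' choose e)" by (simp add: a' e_def)
        have b2: "a choose d = (a' choose d') + (a' choose d)" by (simp add: a' d_def)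
        have x1: "1 \<le> x" using xr by simp
        show ?thesis
        proof (cases "1 \<le> y \<and> (a' choose e) \<le> y")
          case True
          have "y < Suc a' choose e" using False a' by simp
          then have Ky: "K e y = (a' choose d) + K d (y - (a' choose e))"
            using K_unfold[of y a' d] True by (simp add: e_def)
          define y' where "y' = y - (a' choose e)"
          define w where "w = x - (a' choose d)"
          have xge: "a' choose d \<le> x" using Ky hyp by simp
          have Ky': "K d y' \<le> w" using Ky hyp by (simp add: y'_def w_def)
          have sum: "w + y' = r" using True xge a b1 by (simp add: y'_def w_def r_def n_def)
          have IHr: "K d r \<le> w + K d' w" using IH[OF Ky'] sum by simp
          have "x < Suc a' choose d" using xsmall a' by simp
          then have Kx: "K d x = (a' choose d') + K d' w"
            using K_unfold[of x a' d'] xge x1 by (simp add: d_def w_def)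
          show ?thesis using Kn Kx IHr b2 xge by (simp add: w_def)
        next
          case False
          have xge: "a' choose d \<le> x"
          proof (cases "y = 0")
            case True then show ?thesis using a b1 by (simp add: n_def)
          next
            case False
            then have "y < a' choose e" using \<open>\<not> (1 \<le> y \<and> (a' choose e) \<le> y)\<close> by simp
            then show ?thesis using a b1 by (simp add: n_def)
          qed
          define z where "z = x - (a' choose d)"
          have rz: "r \<le> z"
          proof (cases "y = 0")
            case True then show ?thesis using a b1 by (simp add: n_def z_def r_def)
          next
            case False
            then have "y < a' choose e" using \<open>\<not> (1 \<le> y \<and> (a' choose e) \<le> y)\<close> by simp
            then show ?thesis using a b1 by (simp add: n_def z_def r_def)
          qed
          have "x < Suc a' choose d" using xsmall a' by simp
          then have Kx: "K d x = (a' choose d') + K d' z"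
            using K_unfold[of x a' d'] xge x1 by (simp add: d_def z_def)
          have "K d r \<le> K d z" using rz by (rule K_mono)
          also have "K d z \<le> z + K d' z" using IH[of 0 z] by simp
          finally show ?thesis using Kn Kx b2 xge by (simp add: z_def)
        qed
      qed
    qed
    then show ?thesis by (simp add: n_def e_def d_def)
  qed
qed

lemma binrep_val:
  "binrep e n s a \<Longrightarrow> n < Suc (a e) choose e \<and> e \<le> a e \<and>
     (\<Sum>i=s..e. (a i + 1) choose i) = n + K e n"
proof (induction e arbitrary: n)
  case 0 then show ?case unfolding binrep_def by linarith
next
  case (Suc d)
  note br = Suc.prems[unfolded binrep_def]
  show ?case
  proof (cases "s = Suc d")
    case True
    then have n: "n = a (Suc d) choose Suc d" and ge: "Suc d \<le> a (Suc d)" using br by auto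
    have pos: "1 \<le> a (Suc d) choose d" using binom_pos[of d "a (Suc d)"] ge by simp
    have n1: "1 \<le> n" using binom_pos[OF ge] n by simp
    have lt: "n < Suc (a (Suc d)) choose Suc d" using n pos ge by simp
    have Kn: "K (Suc d) n = (a (Suc d) choose d)"
      using K_unfold[of n "a (Suc d)" d] n n1 lt by simp
    show ?thesis using True n ge lt Kn by simp
  next
    case False
    then have sd: "s \<le> d" using br by simp
    define n' where "n' = (\<Sum>i=s..d. a i choose i)"
    have brd: "binrep d n' s a" using br sd by (auto simp: binrep_def n'_def)
    note IH = Suc.IH[OF brd]
    have inc: "a d < a (Suc d)" using br sd by auto
    have n: "n = n' + (a (Suc d) choose Suc d)"
      using br sd by (simp add: n'_def sum.cl_ivl_Suc)
    have ge: "Suc d \<le> a (Suc d)" using IH inc by simp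
    have "Suc (a d) choose d \<le> a (Suc d) choose d" using inc by (intro binomial_right_mono) simp
    then have n'lt: "n' < a (Suc d) choose d" using IH by simp
    have lt: "n < Suc (a (Suc d)) choose Suc d" using n n'lt by simp
    have n1: "1 \<le> n" using binom_pos[OF ge] n by simp
    have Kn: "K (Suc d) n = (a (Suc d) choose d) + K d n'"
      using K_unfold[of n "a (Suc d)" d] n n1 lt by simp
    have "(\<Sum>i=s..Suc d. (a i + 1) choose i) = (\<Sum>i=s..d. (a i + 1) choose i) + ((a (Suc d) + 1) choose Suc d)"
      using sd by (simp add: sum.cl_ivl_Suc)
    then show ?thesis using IH n Kn ge lt by simp
  qed
qed

lemma binrep_exists: "1 \<le> e \<Longrightarrow> 1 \<le> n \<Longrightarrow> \<exists>s a. binrep e n s a"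
proof (induction e arbitrary: n)
  case 0 then show ?case by simp
next
  case (Suc d)
  obtain a0 where a0: "a0 choose Suc d \<le> n" "n < Suc a0 choose Suc d" "Suc d \<le> a0"
    using top_facts[of n d] Suc.prems by auto
  define r where "r = n - (a0 choose Suc d)"
  have rlt: "r < a0 choose d" using a0 by (simp add: r_def)
  show ?case
  proof (cases "r = 0")
    case True
    have "binrep (Suc d) n (Suc d) (\<lambda>_. a0)"
      using True a0 by (simp add: binrep_def r_def)
    then show ?thesis by blast
  next
    case False
    have d1: "1 \<le> d" using rlt False by (cases d) auto
    have "\<exists>s a'. binrep d r s a'" using Suc.IH[OF d1, of r] False by simp
    then obtain s a' where br: "binrep d r s a'" by blast
    have sd: "s \<le> d" and s1: "1 \<le> s" using br by (auto simp: binrep_def)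
    have r_eq: "r = (\<Sum>i=s..d. a' i choose i)" using br by (simp add: binrep_def)
    have "a' d choose d \<le> r" unfolding r_eq using sd by (intro member_le_sum) auto
    then have ad: "a' d < a0"
      using rlt binomial_right_mono[of a0 "a' d" d] by (cases "a' d < a0") auto
    define a where "a = a'(Suc d := a0)"
    have "binrep (Suc d) n s a"
      unfolding binrep_def
    proof (intro conjI)
      show "1 \<le> s" by fact
      show "s \<le> Suc d" using sd by simp
      show "\<forall>i\<in>{s..<Suc d}. a i < a (Suc i)"
      proof
        fix i assume i: "i \<in> {s..<Suc d}"
        show "a i < a (Suc i)"
        proof (cases "i = d")
          case True then show ?thesis using ad by (simp add: a_def)
        next
          case False
          then have "i \<in> {s..<d}" using i by auto
          then show ?thesis using br False i by (auto simp: binrep_def a_def)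
        qed
      qed
      show "s \<le> a s" using br sd by (simp add: binrep_def a_def)
      have "(\<Sum>i=s..Suc d. a i choose i) = (\<Sum>i=s..d. a i choose i) + (a0 choose Suc d)"
        using sd by (simp add: sum.cl_ivl_Suc a_def)
      also have "(\<Sum>i=s..d. a i choose i) = r" unfolding r_eq
        by (intro sum.cong) (auto simp: a_def)
      finally show "n = (\<Sum>i=s..Suc d. a i choose i)" using a0 by (simp add: r_def)
    qed
    then show ?thesis by blast
  qed
qed

lemma IncBin_K: "1 \<le> e \<Longrightarrow> IncBin e n = n + K e n"
proof (cases "n = 0")
  case True then show ?thesis by (simp add: IncBin_def)
next
  case False
  assume e: "1 \<le> e"
  have "\<exists>s a. binrep e n s a" using binrep_exists[OF e, of n] False by simp
  then obtain s a where br: "binrep e n s a" by blast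
  have "(THE v. \<exists>s a. binrep e n s a \<and> v = (\<Sum>i=s..e. (a i + 1) choose i)) = n + K e n"
  proof (rule the_equality)
    show "\<exists>s a. binrep e n s a \<and> n + K e n = (\<Sum>i=s..e. (a i + 1) choose i)"
      using br binrep_val[OF br] by metis
    fix v assume "\<exists>s a. binrep e n s a \<and> v = (\<Sum>i=s..e. (a i + 1) choose i)"
    then show "v = n + K e n" using binrep_val by metis
  qed
  then show ?thesis using False by (simp add: IncBin_def)
qed



definition linepos :: "(nat \<times> 'y) set \<Rightarrow> 'y \<Rightarrow> nat set" where
  "linepos S y = {h. (h, y) \<in> S}"

definition lcomp :: "(nat \<times> 'y) set \<Rightarrow> (nat \<times> 'y) set" where
  "lcomp S = {(h, y). h < card (linepos S y)}"

definition Gop :: "(nat \<times> ('y \<Rightarrow> 'y)) set \<Rightarrow> (nat \<times> 'y) set \<Rightarrow> (nat \<times> 'y) set" where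
  "Gop ops S = S \<union> {(h + d, t y) | h y d t. (h, y) \<in> S \<and> (d, t) \<in> ops}"

lemma finite_linepos: "finite S \<Longrightarrow> finite (linepos S y)"
proof -
  assume "finite S"
  then have "finite (fst ` S)" by simp
  moreover have "linepos S y \<subseteq> fst ` S" unfolding linepos_def by force
  ultimately show ?thesis by (rule finite_subset[rotated])
qed

lemma group_card:
  assumes "finite X"
  shows "card X = (\<Sum>y\<in>snd ` X. card (linepos X y))"
proof -
  have "card X = (\<Sum>x\<in>X. 1)" by simp
  also have "\<dots> = (\<Sum>y\<in>snd ` X. \<Sum>x\<in>{x\<in>X. snd x = y}. 1)"
    using assms by (intro sum.group[symmetric]) auto
  also have "\<dots> = (\<Sum>y\<in>snd ` X. card (linepos X y))"
  proof (intro sum.cong refl)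
    fix y
    have "{x\<in>X. snd x = y} = (\<lambda>h. (h, y)) ` linepos X y" unfolding linepos_def by force
    moreover have "inj (\<lambda>h. (h, y))" by (auto intro: injI)
    ultimately have "card {x\<in>X. snd x = y} = card (linepos X y)"
      by (simp add: card_image inj_on_def)
    then show "(\<Sum>x\<in>{x\<in>X. snd x = y}. 1) = card (linepos X y)" by simp
  qed
  finally show ?thesis .
qed

lemma group_sum:
  assumes "finite X"
  shows "(\<Sum>x\<in>X. fst x) = (\<Sum>y\<in>snd ` X. \<Sum>(linepos X y))"
proof -
  have "(\<Sum>x\<in>X. fst x) = (\<Sum>y\<in>snd ` X. \<Sum>x\<in>{x\<in>X. snd x = y}. fst x)"
    using assms by (intro sum.group[symmetric]) auto
  also have "\<dots> = (\<Sum>y\<in>snd ` X. \<Sum>(linepos X y))"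
  proof (intro sum.cong refl)
    fix y
    have "{x\<in>X. snd x = y} = (\<lambda>h. (h, y)) ` linepos X y" unfolding linepos_def by force
    moreover have "inj_on (\<lambda>h. (h, y)) (linepos X y)" by (auto intro: inj_onI)
    ultimately show "(\<Sum>x\<in>{x\<in>X. snd x = y}. fst x) = \<Sum>(linepos X y)"
      by (simp add: sum.reindex)
  qed
  finally show ?thesis .
qed

lemma linepos_comp: "linepos (lcomp S) y = {..<card (linepos S y)}"
  unfolding linepos_def lcomp_def by auto

lemma snd_comp:
  assumes "finite S"
  shows "snd ` lcomp S = snd ` S"
proof
  show "snd ` lcomp S \<subseteq> snd ` S"
  proof
    fix y assume "y \<in> snd ` lcomp S"
    then obtain h where "(h, y) \<in> lcomp S" by force
    then have "0 < card (linepos S y)" unfolding lcomp_def by auto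
    then have "linepos S y \<noteq> {}" by auto
    then obtain h' where "h' \<in> linepos S y" by blast
    then show "y \<in> snd ` S" unfolding linepos_def by force
  qed
  show "snd ` S \<subseteq> snd ` lcomp S"
  proof
    fix y assume "y \<in> snd ` S"
    then obtain h where "(h, y) \<in> S" by force
    then have "linepos S y \<noteq> {}" unfolding linepos_def by auto
    then have "0 < card (linepos S y)" using finite_linepos[OF assms] by auto
    then have "(0, y) \<in> lcomp S" unfolding lcomp_def by auto
    then show "y \<in> snd ` lcomp S" by force
  qed
qed

lemma finite_comp:
  assumes "finite S" shows "finite (lcomp S)"
proof -
  have "lcomp S \<subseteq> (\<Union>y\<in>snd ` S. (\<lambda>h. (h, y)) ` {..<card (linepos S y)})"
  proof
    fix p assume p: "p \<in> lcomp S"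
    obtain h y where hy: "p = (h, y)" by force
    have "y \<in> snd ` lcomp S" using p hy by force
    then have "y \<in> snd ` S" using snd_comp[OF assms] by simp
    then show "p \<in> (\<Union>y\<in>snd ` S. (\<lambda>h. (h, y)) ` {..<card (linepos S y)})"
      using p hy unfolding lcomp_def by auto
  qed
  moreover have "finite (\<Union>y\<in>snd ` S. (\<lambda>h. (h, y)) ` {..<card (linepos S y)})"
    using assms by auto
  ultimately show ?thesis by (rule finite_subset)
qed

lemma card_comp:
  assumes "finite S" shows "card (lcomp S) = card S"
  using group_card[OF finite_comp[OF assms]] group_card[OF assms] snd_comp[OF assms]
  by (simp add: linepos_comp)

lemma sum_initial_aux:
  "finite P \<Longrightarrow> card P = m \<Longrightarrow>
     \<Sum>{..<m} \<le> \<Sum>P \<and> (P \<noteq> {..<m} \<longrightarrow> \<Sum>{..<m} < \<Sum>P)"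
proof (induction m arbitrary: P)
  case 0 then show ?case by simp
next
  case (Suc m)
  have fin: "finite P" and cP: "card P = Suc m" using Suc.prems by auto
  have ne: "P \<noteq> {}" using cP by auto
  define M where "M = Max P"
  have MP: "M \<in> P" using fin ne by (simp add: M_def)
  have P': "card (P - {M}) = m" using cP MP fin by simp
  have fin': "finite (P - {M})" using fin by simp
  have IH: "\<Sum>{..<m} \<le> \<Sum>(P - {M}) \<and> (P - {M} \<noteq> {..<m} \<longrightarrow> \<Sum>{..<m} < \<Sum>(P - {M}))"
    using Suc.IH[OF fin' P'] .
  have "P \<subseteq> {..M}" using fin by (auto simp: M_def)
  then have "card P \<le> card {..M}" by (intro card_mono) simp_all
  then have Mge: "m \<le> M" using cP by simp
  have sP: "\<Sum>P = M + \<Sum>(P - {M})" using fin MP by (simp add: sum.remove)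
  have sI: "\<Sum>{..<Suc m} = m + \<Sum>{..<m}" by simp
  show ?case
  proof (intro conjI impI)
    show "\<Sum>{..<Suc m} \<le> \<Sum>P" using IH Mge sP sI by linarith
  next
    assume neq: "P \<noteq> {..<Suc m}"
    show "\<Sum>{..<Suc m} < \<Sum>P"
    proof (cases "m = M")
      case True
      have "P - {M} \<noteq> {..<m}"
      proof
        assume "P - {M} = {..<m}"
        then have "P = insert M {..<m}" using MP by blast
        then have "P = {..<Suc m}" using True by auto
        with neq show False by simp
      qed
      then have "\<Sum>{..<m} < \<Sum>(P - {M})" using IH by blast
      then show ?thesis using sP sI True by linarith
    next
      case False
      then show ?thesis using IH Mge sP sI by linarith
    qed
  qed
qed

lemma sum_initial:
  assumes "finite P"
  shows "\<Sum>{..<card P} \<le> \<Sum>P \<and> (P \<noteq> {..<card P} \<longrightarrow> \<Sum>{..<card P} < \<Sum>P)"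
  using sum_initial_aux[OF assms refl] .

lemma pot_comp:
  assumes "finite S"
  shows "(\<Sum>x\<in>lcomp S. fst x) \<le> (\<Sum>x\<in>S. fst x)"
    and "(\<exists>h y. (Suc h, y) \<in> S \<and> (h, y) \<notin> S) \<Longrightarrow> (\<Sum>x\<in>lcomp S. fst x) < (\<Sum>x\<in>S. fst x)"
proof -
  have eq1: "(\<Sum>x\<in>lcomp S. fst x) = (\<Sum>y\<in>snd ` S. \<Sum>{..<card (linepos S y)})"
    using group_sum[OF finite_comp[OF assms]] snd_comp[OF assms] by (simp add: linepos_comp)
  have eq2: "(\<Sum>x\<in>S. fst x) = (\<Sum>y\<in>snd ` S. \<Sum>(linepos S y))"
    using group_sum[OF assms] .
  have le: "\<And>y. \<Sum>{..<card (linepos S y)} \<le> \<Sum>(linepos S y)"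
    using sum_initial finite_linepos[OF assms] by blast
  show "(\<Sum>x\<in>lcomp S. fst x) \<le> (\<Sum>x\<in>S. fst x)"
    unfolding eq1 eq2 by (intro sum_mono le)
  assume "\<exists>h y. (Suc h, y) \<in> S \<and> (h, y) \<notin> S"
  then obtain h y where hy: "(Suc h, y) \<in> S" "(h, y) \<notin> S" by blast
  have yS: "y \<in> snd ` S" using hy by force
  have "linepos S y \<noteq> {..<card (linepos S y)}"
  proof
    assume eq: "linepos S y = {..<card (linepos S y)}"
    have "Suc h \<in> linepos S y" using hy unfolding linepos_def by simp
    then have "h \<in> linepos S y" by (subst eq, subst (asm) eq) simp
    then show False using hy unfolding linepos_def by simp
  qed
  then have lt: "\<Sum>{..<card (linepos S y)} < \<Sum>(linepos S y)"
    using sum_initial finite_linepos[OF assms] by blast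
  show "(\<Sum>x\<in>lcomp S. fst x) < (\<Sum>x\<in>S. fst x)"
    unfolding eq1 eq2
  proof (rule sum_strict_mono_ex1)
    show "finite (snd ` S)" using assms by simp
    show "\<forall>x\<in>snd ` S. \<Sum>{..<card (linepos S x)} \<le> \<Sum>(linepos S x)" using le by blast
    show "\<exists>a\<in>snd ` S. \<Sum>{..<card (linepos S a)} < \<Sum>(linepos S a)" using lt yS by blast
  qed
qed

lemma finite_Gop: "finite S \<Longrightarrow> finite ops \<Longrightarrow> finite (Gop ops S)"
proof -
  assume fS: "finite S" and fo: "finite ops"
  have "{(h + d, t y) | h y d t. (h, y) \<in> S \<and> (d, t) \<in> ops} =
        (\<lambda>((h, y), (d, t)). (h + d, t y)) ` (S \<times> ops)" by force
  then show ?thesis using fS fo unfolding Gop_def by simp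
qed

lemma card_Suc_union:
  assumes "finite P" "P \<noteq> {}"
  shows "Suc (card P) \<le> card (P \<union> Suc ` P)"
proof -
  have "Suc (Max P) \<notin> P" using assms by (meson Max_ge Suc_n_not_le_n)
  moreover have "Suc (Max P) \<in> Suc ` P" using assms by simp
  ultimately have "insert (Suc (Max P)) P \<subseteq> P \<union> Suc ` P" by blast
  moreover have "card (insert (Suc (Max P)) P) = Suc (card P)"
    using assms \<open>Suc (Max P) \<notin> P\<close> by simp
  ultimately show ?thesis using assms by (metis card_mono finite_UnI finite_imageI)
qed

lemma card_Gop_comp:
  assumes fS: "finite S" and fo: "finite ops"
    and ops1: "\<forall>(d, t)\<in>ops. d \<le> 1"
    and pair: "\<forall>t. (1, t) \<in> ops \<longrightarrow> t = id \<or> (0, t) \<in> ops"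
  shows "card (Gop ops (lcomp S)) \<le> card (Gop ops S)"
proof -
  let ?C = "lcomp S"
  have fC: "finite ?C" using finite_comp[OF fS] .
  have fGC: "finite (Gop ops ?C)" using finite_Gop[OF fC fo] .
  have fGS: "finite (Gop ops S)" using finite_Gop[OF fS fo] .
  have sndsub: "snd ` Gop ops ?C \<subseteq> snd ` Gop ops S"
  proof
    fix z assume "z \<in> snd ` Gop ops ?C"
    then obtain h where hz: "(h, z) \<in> Gop ops ?C" by force
    then consider "(h, z) \<in> ?C" | h0 y d t where "(h0, y) \<in> ?C" "(d, t) \<in> ops" "h = h0 + d" "z = t y"
      unfolding Gop_def by blast
    then show "z \<in> snd ` Gop ops S"
    proof cases
      case 1
      then have "z \<in> snd ` S" using snd_comp[OF fS] by force
      then show ?thesis unfolding Gop_def by force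
    next
      case 2
      then have "y \<in> snd ` S" using snd_comp[OF fS] by force
      then obtain h1 where "(h1, y) \<in> S" by force
      then have "(h1 + d, t y) \<in> Gop ops S" using 2 unfolding Gop_def by blast
      then show ?thesis using 2 by force
    qed
  qed
  have line: "card (linepos (Gop ops ?C) z) \<le> card (linepos (Gop ops S) z)" for z
  proof -
    let ?L = "card (linepos (Gop ops S) z)"
    have fL: "finite (linepos (Gop ops S) z)" using finite_linepos[OF fGS] .
    have SL: "linepos S z \<subseteq> linepos (Gop ops S) z" unfolding linepos_def Gop_def by auto
    have "linepos (Gop ops ?C) z \<subseteq> {..<?L}"
    proof
      fix h assume "h \<in> linepos (Gop ops ?C) z"
      then have hz: "(h, z) \<in> Gop ops ?C" unfolding linepos_def by simp
      then consider "(h, z) \<in> ?C" | h0 y d t where "(h0, y) \<in> ?C" "(d, t) \<in> ops" "h = h0 + d" "z = t y"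
        unfolding Gop_def by blast
      then show "h \<in> {..<?L}"
      proof cases
        case 1
        then have "h < card (linepos S z)" unfolding lcomp_def by simp
        also have "\<dots> \<le> ?L" using card_mono[OF fL SL] .
        finally show ?thesis by simp
      next
        case 2
        have h0: "h0 < card (linepos S y)" using 2 unfolding lcomp_def by simp
        have imgd: "(\<lambda>h. h + d) ` linepos S y \<subseteq> linepos (Gop ops S) z"
          using 2 unfolding linepos_def Gop_def by blast
        have d1: "d \<le> 1" using ops1 2 by auto
        show ?thesis
        proof (cases "d = 0")
          case True
          then have "linepos S y \<subseteq> linepos (Gop ops S) z" using imgd by simp
          from card_mono[OF fL this] h0 True 2 show ?thesis by simp
        next
          case False
          then have d: "d = 1" using d1 by simp
          have base: "linepos S y \<subseteq> linepos (Gop ops S) z"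
          proof (cases "t = id")
            case True
            then have "z = y" using 2 by simp
            then show ?thesis using SL by simp
          next
            case False
            then have "(0, t) \<in> ops" using pair 2 d by auto
            then show ?thesis using 2 unfolding linepos_def Gop_def by force
          qed
          have "Suc ` linepos S y \<subseteq> linepos (Gop ops S) z" using imgd d by simp
          with base have sub: "linepos S y \<union> Suc ` linepos S y \<subseteq> linepos (Gop ops S) z" by blast
          have ne: "linepos S y \<noteq> {}" using h0 by auto
          have "Suc (card (linepos S y)) \<le> card (linepos S y \<union> Suc ` linepos S y)"
            using card_Suc_union[OF finite_linepos[OF fS] ne] .
          also have "\<dots> \<le> ?L" using card_mono[OF fL sub] .
          finally show ?thesis using h0 d 2 by simp
        qed
      qed
    qed
    then show ?thesis by (metis card_lessThan card_mono finite_lessThan)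
  qed
  have "card (Gop ops ?C) = (\<Sum>z\<in>snd ` Gop ops ?C. card (linepos (Gop ops ?C) z))"
    using group_card[OF fGC] .
  also have "\<dots> \<le> (\<Sum>z\<in>snd ` Gop ops S. card (linepos (Gop ops ?C) z))"
    using sndsub fGS by (intro sum_mono2) auto
  also have "\<dots> \<le> (\<Sum>z\<in>snd ` Gop ops S. card (linepos (Gop ops S) z))"
    by (intro sum_mono line)
  also have "\<dots> = card (Gop ops S)" using group_card[OF fGS] by simp
  finally show ?thesis .
qed

lemma comp_region:
  assumes fS: "finite S" and SR: "S \<subseteq> R"
    and down: "\<And>h y. (Suc h, y) \<in> R \<Longrightarrow> (h, y) \<in> R"
  shows "lcomp S \<subseteq> R"
proof
  fix p assume "p \<in> lcomp S"
  then obtain h y where p: "p = (h, y)" and h: "h < card (linepos S y)" unfolding lcomp_def by auto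
  have fL: "finite (linepos S y)" using finite_linepos[OF fS] .
  have ne: "linepos S y \<noteq> {}" using h by auto
  define M where "M = Max (linepos S y)"
  have "M \<in> linepos S y" using fL ne by (simp add: M_def)
  then have MR: "(M, y) \<in> R" using SR unfolding linepos_def by auto
  have "linepos S y \<subseteq> {..M}" using fL by (auto simp: M_def)
  then have "card (linepos S y) \<le> Suc M" using card_mono[of "{..M}"] by fastforce
  then have hM: "h \<le> M" using h by simp
  have "\<And>k. k \<le> M \<Longrightarrow> (M - k, y) \<in> R"
  proof -
    fix k show "k \<le> M \<Longrightarrow> (M - k, y) \<in> R"
    proof (induction k)
      case 0 then show ?case using MR by simp
    next
      case (Suc k)
      then have "(M - k, y) \<in> R" by simp
      moreover have "M - k = Suc (M - Suc k)" using Suc.prems by simp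
      ultimately show ?case using down by metis
    qed
  qed
  from this[of "M - h"] hM show "p \<in> R" using p by simp
qed



definition incL :: "nat list set \<Rightarrow> nat list set" where
  "incL B = B \<union> {b[i := Suc (b!i)] | b i. b \<in> B \<and> i < length b}"

definition upd :: "nat \<Rightarrow> nat list \<Rightarrow> nat list" where
  "upd k y = y[k := Suc (y!k)]"

fun tr :: "nat option \<Rightarrow> nat \<Rightarrow> nat list \<Rightarrow> nat list" where
  "tr None h c = c"
| "tr (Some i) h c = c[i := c!i + h]"

definition phi :: "nat option \<Rightarrow> nat list \<Rightarrow> nat \<times> nat list" where
  "phi j b = (hd b, tr j (hd b) (tl b))"

fun untr :: "nat option \<Rightarrow> nat \<Rightarrow> nat list \<Rightarrow> nat list" where
  "untr None h y = y"
| "untr (Some i) h y = y[i := y!i - h]"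

definition psi :: "nat option \<Rightarrow> nat \<times> nat list \<Rightarrow> nat list" where
  "psi j p = fst p # untr j (fst p) (snd p)"

fun okreg :: "nat option \<Rightarrow> nat \<Rightarrow> nat list \<Rightarrow> bool" where
  "okreg None h y = True"
| "okreg (Some i) h y = (h \<le> y!i)"

definition reg :: "nat \<Rightarrow> nat option \<Rightarrow> (nat \<times> nat list) set" where
  "reg e' j = {(h, y). length y = e' \<and> okreg j h y}"

fun valid :: "nat \<Rightarrow> nat option \<Rightarrow> bool" where
  "valid e' None = True"
| "valid e' (Some i) = (i < e')"

fun t1 :: "nat option \<Rightarrow> nat list \<Rightarrow> nat list" where
  "t1 None = id"
| "t1 (Some i) = upd i"

definition ops :: "nat \<Rightarrow> nat option \<Rightarrow> (nat \<times> (nat list \<Rightarrow> nat list)) set" where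
  "ops e' j = insert (1, t1 j) ((\<lambda>k. (0, upd k)) ` {..<e'})"

lemma length_tr[simp]: "length (tr j h c) = length c"
  by (cases j) auto

lemma length_untr[simp]: "length (untr j h c) = length c"
  by (cases j) auto

lemma phi_reg:
  assumes "length b = Suc e'" "valid e' j"
  shows "phi j b \<in> reg e' j"
  using assms by (cases b; cases j) (auto simp: phi_def reg_def)

lemma psi_phi:
  assumes "length b = Suc e'" "valid e' j"
  shows "psi j (phi j b) = b"
  using assms by (cases b; cases j) (auto simp: phi_def psi_def)

lemma phi_psi:
  assumes "p \<in> reg e' j" "valid e' j"
  shows "phi j (psi j p) = p" "length (psi j p) = Suc e'"
  using assms by (cases p; cases j; auto simp: phi_def psi_def reg_def)+

lemma inj_phi:
  assumes "valid e' j"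
  shows "inj_on (phi j) {b. length b = Suc e'}"
  by (rule inj_on_inverseI[where g = "psi j"]) (use psi_phi assms in auto)

lemma incL_length: "(\<forall>b\<in>B. length b = e) \<Longrightarrow> b' \<in> incL B \<Longrightarrow> length b' = e"
  unfolding incL_def by auto

lemma finite_incL:
  assumes "finite B" "\<forall>b\<in>B. length b = e"
  shows "finite (incL B)"
proof -
  have "{b[i := Suc (b!i)] | b i. b \<in> B \<and> i < length b} \<subseteq> (\<lambda>(b, i). b[i := Suc (b!i)]) ` (B \<times> {..<e})"
    using assms(2) by force
  moreover have "finite ((\<lambda>(b, i). b[i := Suc (b!i)]) ` (B \<times> {..<e}))" using assms(1) by simp
  ultimately show ?thesis unfolding incL_def using assms(1) finite_subset by blast
qed

lemma phi_step0:
  assumes "b = h # c" "valid (length c) j"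
  shows "phi j (b[0 := Suc (b!0)]) = (fst (phi j b) + 1, t1 j (snd (phi j b)))"
  using assms by (cases j) (auto simp: phi_def upd_def)

lemma phi_stepS:
  assumes "b = h # c" "valid (length c) j" "k < length c"
  shows "phi j (b[Suc k := Suc (b!Suc k)]) = (fst (phi j b) + 0, upd k (snd (phi j b)))"
proof (cases j)
  case None then show ?thesis using assms by (simp add: phi_def upd_def)
next
  case (Some i)
  then have i: "i < length c" using assms by simp
  show ?thesis using assms Some i
    by (cases "k = i") (auto simp: phi_def upd_def list_update_swap nth_list_update)
qed

lemma phi_incL:
  assumes L: "\<forall>b\<in>B. length b = Suc e'" and v: "valid e' j"
  shows "phi j ` incL B = Gop (ops e' j) (phi j ` B)"
proof
  show "phi j ` incL B \<subseteq> Gop (ops e' j) (phi j ` B)"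
  proof
    fix p assume "p \<in> phi j ` incL B"
    then obtain x where x: "x \<in> incL B" "p = phi j x" by blast
    show "p \<in> Gop (ops e' j) (phi j ` B)"
    proof (cases "x \<in> B")
      case True then show ?thesis using x unfolding Gop_def by blast
    next
      case False
      then obtain b i where bi: "b \<in> B" "i < length b" "x = b[i := Suc (b!i)]"
        using x unfolding incL_def by blast
      obtain h c where b: "b = h # c" using L bi by (cases b) auto
      have lc: "length c = e'" using L bi b by auto
      show ?thesis
      proof (cases i)
        case 0
        have "p = (fst (phi j b) + 1, t1 j (snd (phi j b)))"
          using phi_step0[OF b] v lc x bi 0 by simp
        moreover have "(1, t1 j) \<in> ops e' j" by (simp add: ops_def)
        moreover have "(fst (phi j b), snd (phi j b)) \<in> phi j ` B" using bi by simp
        ultimately show ?thesis unfolding Gop_def by blast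
      next
        case (Suc k)
        have k: "k < length c" using bi b Suc by simp
        have "p = (fst (phi j b) + 0, upd k (snd (phi j b)))"
          using phi_stepS[OF b _ k] v lc x bi Suc by simp
        moreover have "(0, upd k) \<in> ops e' j" using k lc by (simp add: ops_def)
        moreover have "(fst (phi j b), snd (phi j b)) \<in> phi j ` B" using bi by simp
        ultimately show ?thesis unfolding Gop_def by blast
      qed
    qed
  qed
  show "Gop (ops e' j) (phi j ` B) \<subseteq> phi j ` incL B"
  proof
    fix p assume "p \<in> Gop (ops e' j) (phi j ` B)"
    then consider "p \<in> phi j ` B" | h y d t where "(h, y) \<in> phi j ` B" "(d, t) \<in> ops e' j" "p = (h + d, t y)"
      unfolding Gop_def by blast
    then show "p \<in> phi j ` incL B"
    proof cases
      case 1 then show ?thesis unfolding incL_def by blast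
    next
      case 2
      then obtain b where bB: "b \<in> B" and hy: "phi j b = (h, y)" by auto
      obtain h' c where b: "b = h' # c" using L bB by (cases b) auto
      have lc: "length c = e'" using L bB b by auto
      from 2(2) consider "d = 1" "t = t1 j" | k where "k < e'" "d = 0" "t = upd k"
        unfolding ops_def by auto
      then show ?thesis
      proof cases
        case 1
        have "p = phi j (b[0 := Suc (b!0)])"
          using phi_step0[OF b] v lc hy 1 2 by simp
        moreover have "b[0 := Suc (b!0)] \<in> incL B" using bB b unfolding incL_def by fastforce
        ultimately show ?thesis by blast
      next
        case (2 k)
        have "p = phi j (b[Suc k := Suc (b!Suc k)])"
          using phi_stepS[OF b, where k=k] v lc hy 2 \<open>p = (h + d, t y)\<close> by simp
        moreover have "b[Suc k := Suc (b!Suc k)] \<in> incL B" using bB b 2 lc unfolding incL_def by fastforce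
        ultimately show ?thesis by blast
      qed
    qed
  qed
qed

lemma ops_props:
  assumes "valid e' j"
  shows "finite (ops e' j)" "\<forall>(d, t)\<in>ops e' j. d \<le> 1"
    "\<forall>t. (1, t) \<in> ops e' j \<longrightarrow> t = id \<or> (0, t) \<in> ops e' j"
proof -
  show "finite (ops e' j)" by (simp add: ops_def)
  show "\<forall>(d, t)\<in>ops e' j. d \<le> 1" by (auto simp: ops_def)
  show "\<forall>t. (1, t) \<in> ops e' j \<longrightarrow> t = id \<or> (0, t) \<in> ops e' j"
    using assms by (cases j) (auto simp: ops_def)
qed

lemma compress_list:
  assumes fB: "finite B" and L: "\<forall>b\<in>B. length b = Suc e'" and v: "valid e' j"
    and gap: "\<exists>h y. (Suc h, y) \<in> phi j ` B \<and> (h, y) \<notin> phi j ` B"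
  shows "\<exists>B'. finite B' \<and> (\<forall>b\<in>B'. length b = Suc e') \<and> card B' = card B \<and>
           card (incL B') \<le> card (incL B) \<and> (\<Sum>b\<in>B'. hd b) < (\<Sum>b\<in>B. hd b)"
proof -
  define S where "S = phi j ` B"
  have fS: "finite S" using fB by (simp add: S_def)
  have SR: "S \<subseteq> reg e' j" using phi_reg L v by (auto simp: S_def)
  have down: "\<And>h y. (Suc h, y) \<in> reg e' j \<Longrightarrow> (h, y) \<in> reg e' j"
    by (cases j) (auto simp: reg_def)
  define C where "C = lcomp S"
  have CR: "C \<subseteq> reg e' j" unfolding C_def using comp_region[OF fS SR down] .
  have fC: "finite C" unfolding C_def using finite_comp[OF fS] .
  define B' where "B' = psi j ` C"
  have L': "\<forall>b\<in>B'. length b = Suc e'" using phi_psi(2) CR v by (auto simp: B'_def)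
  have phiB': "phi j ` B' = C"
  proof -
    have "phi j ` B' = (\<lambda>p. phi j (psi j p)) ` C" by (simp add: B'_def image_image)
    also have "\<dots> = id ` C" using phi_psi(1) CR v by (intro image_cong) auto
    also have "\<dots> = C" by simp
    finally show ?thesis .
  qed
  have injB: "inj_on (phi j) B" by (rule inj_on_subset[OF inj_phi[OF v]]) (use L in auto)
  have injB': "inj_on (phi j) B'" by (rule inj_on_subset[OF inj_phi[OF v]]) (use L' in auto)
  have cardB': "card B' = card B"
  proof -
    have "card B' = card (phi j ` B')" using card_image[OF injB'] by simp
    also have "\<dots> = card S" using phiB' card_comp[OF fS] by (simp add: C_def)
    also have "\<dots> = card B" using card_image[OF injB] by (simp add: S_def)
    finally show ?thesis .
  qed
  have fB': "finite B'" using fC by (simp add: B'_def)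
  have incB: "card (incL B) = card (Gop (ops e' j) S)"
  proof -
    have "inj_on (phi j) (incL B)"
      by (rule inj_on_subset[OF inj_phi[OF v]]) (use incL_length[OF L] in auto)
    then have "card (incL B) = card (phi j ` incL B)" by (simp add: card_image)
    then show ?thesis using phi_incL[OF L v] by (simp add: S_def)
  qed
  have incB': "card (incL B') = card (Gop (ops e' j) C)"
  proof -
    have "inj_on (phi j) (incL B')"
      by (rule inj_on_subset[OF inj_phi[OF v]]) (use incL_length[OF L'] in auto)
    then have "card (incL B') = card (phi j ` incL B')" by (simp add: card_image)
    then show ?thesis using phi_incL[OF L' v] phiB' by simp
  qed
  note op = ops_props[OF v]
  have le: "card (incL B') \<le> card (incL B)"
    unfolding incB incB' C_def by (rule card_Gop_comp[OF fS op])
  have potB: "(\<Sum>b\<in>B. hd b) = (\<Sum>p\<in>S. fst p)"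
    unfolding S_def by (subst sum.reindex[OF injB]) (simp add: phi_def)
  have potB': "(\<Sum>b\<in>B'. hd b) = (\<Sum>p\<in>C. fst p)"
    unfolding phiB'[symmetric] by (subst sum.reindex[OF injB']) (simp add: phi_def)
  have lt: "(\<Sum>p\<in>C. fst p) < (\<Sum>p\<in>S. fst p)"
    unfolding C_def using pot_comp(2)[OF fS] gap by (simp add: S_def)
  show ?thesis using fB' L' cardB' le lt potB potB' by auto
qed

definition stable :: "nat list set \<Rightarrow> bool" where
  "stable B \<longleftrightarrow> (\<forall>h c. Suc h # c \<in> B \<longrightarrow> h # c \<in> B \<and> (\<forall>i<length c. h # c[i := Suc (c!i)] \<in> B))"

lemma unstable_dir:
  assumes L: "\<forall>b\<in>B. length b = Suc e'" and ns: "\<not> stable B"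
  shows "\<exists>j. valid e' j \<and> (\<exists>h y. (Suc h, y) \<in> phi j ` B \<and> (h, y) \<notin> phi j ` B)"
proof -
  obtain h c where hc: "Suc h # c \<in> B" and
    bad: "h # c \<notin> B \<or> (\<exists>i<length c. h # c[i := Suc (c!i)] \<notin> B)"
    using ns unfolding stable_def by blast
  have lc: "length c = e'" using L hc by force
  from bad show ?thesis
  proof
    assume nb: "h # c \<notin> B"
    have "(Suc h, c) \<in> phi None ` B" using hc by (force simp: phi_def)
    moreover have "(h, c) \<notin> phi None ` B"
    proof
      assume "(h, c) \<in> phi None ` B"
      then obtain b where "b \<in> B" "phi None b = (h, c)" by auto
      moreover then have "b = psi None (h, c)" using psi_phi[of b e' None] L by auto
      ultimately show False using nb by (simp add: psi_def)
    qed
    ultimately show ?thesis by (intro exI[of _ None]) auto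
  next
    assume "\<exists>i<length c. h # c[i := Suc (c!i)] \<notin> B"
    then obtain i where i: "i < length c" and nb: "h # c[i := Suc (c!i)] \<notin> B" by blast
    define y where "y = c[i := c!i + Suc h]"
    have "(Suc h, y) \<in> phi (Some i) ` B" using hc by (force simp: phi_def y_def)
    moreover have "(h, y) \<notin> phi (Some i) ` B"
    proof
      assume "(h, y) \<in> phi (Some i) ` B"
      then obtain b where bB: "b \<in> B" and pb: "phi (Some i) b = (h, y)" by auto
      have "b = psi (Some i) (h, y)" using psi_phi[of b e' "Some i"] L bB pb i lc by auto
      also have "\<dots> = h # c[i := Suc (c!i)]" using i by (simp add: psi_def y_def)
      finally show False using nb bB by simp
    qed
    ultimately show ?thesis using i lc by (intro exI[of _ "Some i"]) auto
  qed
qed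

lemma stable_zero:
  assumes "stable B" "h # c \<in> B"
  shows "0 # c \<in> B"
  using assms(2)
proof (induction h)
  case 0 then show ?case .
next
  case (Suc h)
  then have "h # c \<in> B" using assms(1) unfolding stable_def by blast
  then show ?case using Suc.IH by simp
qed

lemma core_step:
  assumes IHe: "\<And>B. finite B \<Longrightarrow> \<forall>b\<in>B. length b = e' \<Longrightarrow> card B + K e' (card B) \<le> card (incL B)"
    and IHn: "\<And>B. finite B \<Longrightarrow> \<forall>b\<in>B. length b = Suc e' \<Longrightarrow> card B < n \<Longrightarrow>
                  card B + K (Suc e') (card B) \<le> card (incL B)"
    and fB: "finite B" and L: "\<forall>b\<in>B. length b = Suc e'" and st: "stable B" and cB: "card B = n"
  shows "n + K (Suc e') n \<le> card (incL B)"
proof (cases "n = 0")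
  case True then show ?thesis by simp
next
  case False
  define B0 where "B0 = {c. 0 # c \<in> B}"
  have fB0: "finite B0"
  proof -
    have "B0 \<subseteq> tl ` B" unfolding B0_def by force
    then show ?thesis using fB finite_subset by blast
  qed
  have L0: "\<forall>c\<in>B0. length c = e'" using L unfolding B0_def by force
  define x where "x = card B0"
  define R where "R = {h # c | h c. Suc h # c \<in> B}"
  define shf :: "nat list \<Rightarrow> nat list" where "shf b = Suc (hd b) # tl b" for b
  have Bsplit: "B = Cons 0 ` B0 \<union> shf ` R"
  proof
    show "B \<subseteq> Cons 0 ` B0 \<union> shf ` R"
    proof
      fix b assume bB: "b \<in> B"
      then obtain h c where b: "b = h # c" using L by (cases b) auto
      show "b \<in> Cons 0 ` B0 \<union> shf ` R"
      proof (cases h)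
        case 0 then show ?thesis using bB b by (auto simp: B0_def)
      next
        case (Suc h')
        then have "h' # c \<in> R" using bB b by (auto simp: R_def)
        moreover have "shf (h' # c) = b" using b Suc by (simp add: shf_def)
        ultimately show ?thesis by blast
      qed
    qed
    show "Cons 0 ` B0 \<union> shf ` R \<subseteq> B" by (auto simp: B0_def R_def shf_def)
  qed
  have disj: "Cons 0 ` B0 \<inter> shf ` R = {}" by (auto simp: shf_def)
  have fR: "finite R"
  proof -
    have "R \<subseteq> (\<lambda>b. (hd b - 1) # tl b) ` B" unfolding R_def by force
    then show ?thesis using fB finite_subset by blast
  qed
  have injshf: "inj_on shf R" by (auto simp: inj_on_def shf_def R_def)
  have cardn: "n = x + card R"
  proof -
    have "card B = card (Cons 0 ` B0) + card (shf ` R)"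
      using Bsplit disj fB0 fR by (simp add: card_Un_disjoint)
    also have "\<dots> = x + card R" by (simp add: card_image injshf x_def)
    finally show ?thesis using cB by simp
  qed
  have x1: "1 \<le> x"
  proof -
    obtain b where "b \<in> B" using False cB by fastforce
    then obtain h c where "h # c \<in> B" using L by (cases b) auto
    then have "0 # c \<in> B" using stable_zero[OF st] by blast
    then have "B0 \<noteq> {}" by (auto simp: B0_def)
    then show ?thesis using fB0 by (simp add: x_def Suc_le_eq card_gt_0_iff)
  qed
  have LR: "\<forall>b\<in>R. length b = Suc e'" using L by (auto simp: R_def)
  have incR: "incL R \<subseteq> B"
  proof
    fix r assume "r \<in> incL R"
    then consider "r \<in> R" | b i where "b \<in> R" "i < length b" "r = b[i := Suc (b!i)]"
      unfolding incL_def by blast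
    then show "r \<in> B"
    proof cases
      case 1
      then obtain h c where "r = h # c" "Suc h # c \<in> B" by (auto simp: R_def)
      then show ?thesis using st unfolding stable_def by blast
    next
      case 2
      then obtain h c where b: "b = h # c" "Suc h # c \<in> B" by (auto simp: R_def)
      show ?thesis
      proof (cases i)
        case 0 then show ?thesis using 2 b by simp
      next
        case (Suc k)
        then have "k < length c" using 2 b by simp
        then have "h # c[k := Suc (c!k)] \<in> B" using st b unfolding stable_def by blast
        then show ?thesis using 2 b Suc by simp
      qed
    qed
  qed
  have "card (incL R) \<le> n" using card_mono[OF fB incR] cB by simp
  moreover have "card R + K (Suc e') (card R) \<le> card (incL R)"
    using IHn[OF fR LR] cardn x1 by simp
  ultimately have Kx: "K (Suc e') (card R) \<le> x" using cardn by simp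
  have KL1: "K (Suc e') n \<le> x + K e' x" using L1[OF Kx] cardn by simp
  have IH0: "x + K e' x \<le> card (incL B0)" using IHe[OF fB0 L0] by (simp add: x_def)
  have sub: "shf ` B \<union> Cons 0 ` incL B0 \<subseteq> incL B"
  proof
    fix z assume "z \<in> shf ` B \<union> Cons 0 ` incL B0"
    then consider b where "b \<in> B" "z = shf b" | c where "c \<in> incL B0" "z = 0 # c" by blast
    then show "z \<in> incL B"
    proof cases
      case 1
      then obtain h c where b: "b = h # c" using L by (cases b) auto
      then have "z = b[0 := Suc (b!0)]" using 1 by (simp add: shf_def)
      then show ?thesis using 1 b unfolding incL_def by fastforce
    next
      case 2
      from 2(1) consider "c \<in> B0" | c0 k where "c0 \<in> B0" "k < length c0" "c = c0[k := Suc (c0!k)]"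
        unfolding incL_def by blast
      then show ?thesis
      proof cases
        case 1 then show ?thesis using 2 by (auto simp: B0_def incL_def)
      next
        case 3: 2
        have "z = (0 # c0)[Suc k := Suc ((0 # c0)!Suc k)]" using 2 3 by simp
        moreover have "0 # c0 \<in> B" using 3 by (simp add: B0_def)
        moreover have "Suc k < length (0 # c0)" using 3 by simp
        ultimately show ?thesis unfolding incL_def by blast
      qed
    qed
  qed
  have fI: "finite (incL B)" using finite_incL[OF fB L] .
  have fI0: "finite (incL B0)" using finite_incL[OF fB0 L0] .
  have injB: "inj_on shf B"
  proof (rule inj_onI)
    fix a b assume "a \<in> B" "b \<in> B" "shf a = shf b"
    moreover then have "a \<noteq> []" "b \<noteq> []" using L by auto
    ultimately show "a = b" by (simp add: shf_def) (metis list.collapse)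
  qed
  have "card (shf ` B \<union> Cons 0 ` incL B0) = n + card (incL B0)"
  proof -
    have "shf ` B \<inter> Cons 0 ` incL B0 = {}" by (auto simp: shf_def)
    then have "card (shf ` B \<union> Cons 0 ` incL B0) = card (shf ` B) + card (Cons 0 ` incL B0)"
      using fB fI0 by (simp add: card_Un_disjoint)
    also have "\<dots> = n + card (incL B0)" using injB cB by (simp add: card_image)
    finally show ?thesis .
  qed
  then have "n + card (incL B0) \<le> card (incL B)" using card_mono[OF fI sub] by simp
  then show ?thesis using KL1 IH0 by linarith
qed

theorem core: "finite B \<Longrightarrow> \<forall>b\<in>B. length b = e \<Longrightarrow> card B + K e (card B) \<le> card (incL B)"
proof (induction e arbitrary: B)
  case 0
  then have "incL B = B" unfolding incL_def by auto
  then show ?case by simp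
next
  case (Suc e')
  have main: "\<And>B. finite B \<Longrightarrow> \<forall>b\<in>B. length b = Suc e' \<Longrightarrow> card B = n \<Longrightarrow>
                n + K (Suc e') n \<le> card (incL B)" for n
  proof (induction n rule: less_induct)
    case (less n)
    have IHn: "\<And>B. finite B \<Longrightarrow> \<forall>b\<in>B. length b = Suc e' \<Longrightarrow> card B < n \<Longrightarrow>
                  card B + K (Suc e') (card B) \<le> card (incL B)"
      using less.IH by blast
    fix B :: "nat list set" assume fB: "finite B" and L: "\<forall>b\<in>B. length b = Suc e'" and cB: "card B = n"
    show "n + K (Suc e') n \<le> card (incL B)"
      using fB L cB
    proof (induction "\<Sum>b\<in>B. hd b" arbitrary: B rule: less_induct)
      case less
      show ?case
      proof (cases "stable B")
        case True
        show ?thesis using core_step[OF Suc.IH IHn less.prems(1,2) True less.prems(3)] by simp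
      next
        case False
        obtain j where v: "valid e' j" and gap: "\<exists>h y. (Suc h, y) \<in> phi j ` B \<and> (h, y) \<notin> phi j ` B"
          using unstable_dir[OF less.prems(2) False] by blast
        obtain B' where B': "finite B'" "\<forall>b\<in>B'. length b = Suc e'" "card B' = card B"
          "card (incL B') \<le> card (incL B)" "(\<Sum>b\<in>B'. hd b) < (\<Sum>b\<in>B. hd b)"
          using compress_list[OF less.prems(1,2) v gap] by blast
        have "n + K (Suc e') n \<le> card (incL B')"
          using less.hyps[OF B'(5) B'(1,2)] B'(3) less.prems(3) by simp
        then show ?thesis using B'(4) by simp
      qed
    qed
  qed
  show ?case using main[OF Suc.prems refl] .
qed



fun gset :: "nat list \<Rightarrow> nat set" where
  "gset [] = {}"
| "gset (t # c) = insert (Suc t) ((\<lambda>x. x + Suc t) ` gset c)"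

lemma gset_pos: "x \<in> gset b \<Longrightarrow> 1 \<le> x"
  by (induction b arbitrary: x) auto

lemma finite_gset[simp]: "finite (gset b)"
  by (induction b) auto

lemma card_gset: "card (gset b) = length b"
proof (induction b)
  case Nil then show ?case by simp
next
  case (Cons t c)
  have "Suc t \<notin> (\<lambda>x. x + Suc t) ` gset c" using gset_pos[of _ c] by force
  moreover have "inj (\<lambda>x::nat. x + Suc t)" by (auto intro: injI)
  ultimately show ?case using Cons by (simp add: card_image inj_on_def)
qed

lemma gset_ge: "x \<in> gset (t # c) \<Longrightarrow> Suc t \<le> x"
  by auto

lemma gset_inj: "gset b1 = gset b2 \<Longrightarrow> b1 = b2"
proof (induction b1 arbitrary: b2)
  case Nil
  then show ?case using card_gset[of b2] by auto
next
  case (Cons t c)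
  obtain t' c' where b2: "b2 = t' # c'"
    using Cons.prems card_gset[of b2] card_gset[of "t # c"] by (cases b2) auto
  have "Suc t' \<in> gset (t # c)" using Cons.prems b2 by simp
  then have "Suc t \<le> Suc t'" by (rule gset_ge)
  moreover have "Suc t \<in> gset (t # c)" by simp
  then have "Suc t \<in> gset b2" by (simp only: Cons.prems)
  then have "Suc t' \<le> Suc t" unfolding b2 by (rule gset_ge)
  ultimately have tt: "t = t'" by simp
  have n1: "Suc t \<notin> (\<lambda>x. x + Suc t) ` gset c" using gset_pos[of _ c] by force
  have n2: "Suc t \<notin> (\<lambda>x. x + Suc t) ` gset c'" using gset_pos[of _ c'] by force
  have "(\<lambda>x. x + Suc t) ` gset c = (\<lambda>x. x + Suc t) ` gset c'"
  proof -
    have "insert (Suc t) ((\<lambda>x. x + Suc t) ` gset c) = insert (Suc t) ((\<lambda>x. x + Suc t) ` gset c')"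
      using Cons.prems b2 tt by simp
    then show ?thesis using insert_ident[OF n1 n2] by simp
  qed
  moreover have "inj (\<lambda>x::nat. x + Suc t)" by (auto intro: injI)
  ultimately have "gset c = gset c'" by (simp add: inj_image_eq_iff)
  then show ?case using Cons.IH b2 tt by simp
qed

lemma gset_surj_aux: "finite u \<Longrightarrow> 0 \<notin> u \<Longrightarrow> card u = n \<Longrightarrow> \<exists>b. gset b = u"
proof (induction n arbitrary: u)
  case 0 then show ?case by (intro exI[of _ "[]"]) simp
next
  case (Suc n)
  have fu: "finite u" and u0: "0 \<notin> u" and cu: "card u = Suc n" using Suc.prems by auto
  have ne: "u \<noteq> {}" using cu by auto
  define m where "m = Min u"
  have mu: "m \<in> u" using fu ne unfolding m_def by (rule Min_in)
  have m1: "1 \<le> m" using mu u0 by (cases m) auto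
  have gt: "m < x" if "x \<in> u - {m}" for x
  proof -
    have "m \<le> x" using fu that unfolding m_def by (intro Min_le) auto
    moreover have "x \<noteq> m" using that by auto
    ultimately show ?thesis by simp
  qed
  define u' where "u' = (\<lambda>x. x - m) ` (u - {m})"
  have inj: "inj_on (\<lambda>x. x - m) (u - {m})"
  proof (rule inj_onI)
    fix x y assume "x \<in> u - {m}" "y \<in> u - {m}" "x - m = y - m"
    moreover then have "m < x" "m < y" using gt by auto
    ultimately show "x = y" by simp
  qed
  have "card (u - {m}) = n" using cu mu fu by simp
  then have cu': "card u' = n" using inj by (simp add: u'_def card_image)
  have u'0: "0 \<notin> u'"
  proof
    assume "0 \<in> u'"
    then obtain x where "x \<in> u - {m}" "0 = x - m" unfolding u'_def by blast
    then show False using gt[of x] by simp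
  qed
  have fu': "finite u'" using fu by (simp add: u'_def)
  obtain c where c: "gset c = u'" using Suc.IH[OF fu' u'0 cu'] by blast
  have "gset ((m - 1) # c) = insert m ((\<lambda>x. x + m) ` u')" using c m1 by simp
  also have "(\<lambda>x. x + m) ` u' = u - {m}"
  proof -
    have "(\<lambda>x. x + m) ` u' = (\<lambda>x. x - m + m) ` (u - {m})" by (simp add: u'_def image_image)
    also have "\<dots> = (\<lambda>x. x) ` (u - {m})"
    proof (rule image_cong)
      fix x assume "x \<in> u - {m}"
      then show "x - m + m = x" using gt[of x] by simp
    qed simp
    finally show ?thesis by simp
  qed
  also have "insert m (u - {m}) = u" using mu by blast
  finally show ?case by blast
qed

lemma gset_surj: "finite u \<Longrightarrow> 0 \<notin> u \<Longrightarrow> \<exists>b. gset b = u"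
  using gset_surj_aux by blast

definition sig :: "nat \<Rightarrow> nat \<Rightarrow> nat" where
  "sig k j = (if j < k then j else Suc j)"

lemma sig_Inc1: "sig k \<in> Inc1"
  unfolding Inc1_def sig_def by auto

lemma id_Inc1: "(\<lambda>x. x) \<in> Inc1"
  unfolding Inc1_def by auto

lemma gset_step:
  "i < length b \<Longrightarrow> \<exists>k\<ge>1. gset (b[i := Suc (b!i)]) = sig k ` gset b"
proof (induction b arbitrary: i)
  case Nil then show ?case by simp
next
  case (Cons t c)
  show ?case
  proof (cases i)
    case 0
    have "gset ((t # c)[i := Suc ((t # c)!i)]) = sig (Suc t) ` gset (t # c)"
    proof -
      have "sig (Suc t) ` gset (t # c) = insert (sig (Suc t) (Suc t)) ((\<lambda>x. sig (Suc t) (x + Suc t)) ` gset c)"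
        by (simp add: image_image)
      also have "sig (Suc t) (Suc t) = Suc (Suc t)" by (simp add: sig_def)
      also have "(\<lambda>x. sig (Suc t) (x + Suc t)) ` gset c = (\<lambda>x. x + Suc (Suc t)) ` gset c"
        by (intro image_cong) (auto simp: sig_def)
      finally show ?thesis using 0 by simp
    qed
    then show ?thesis by (intro exI[of _ "Suc t"]) simp
  next
    case (Suc i')
    then have i': "i' < length c" using Cons.prems by simp
    obtain k where k: "1 \<le> k" "gset (c[i' := Suc (c!i')]) = sig k ` gset c" using Cons.IH[OF i'] by blast
    have "gset ((t # c)[i := Suc ((t # c)!i)]) = insert (Suc t) ((\<lambda>x. x + Suc t) ` sig k ` gset c)"
      using Suc k by simp
    also have "\<dots> = sig (k + Suc t) ` gset (t # c)"
    proof -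
      have "sig (k + Suc t) ` gset (t # c) = insert (sig (k + Suc t) (Suc t)) ((\<lambda>x. sig (k + Suc t) (x + Suc t)) ` gset c)"
        by (simp add: image_image)
      also have "sig (k + Suc t) (Suc t) = Suc t" using k by (simp add: sig_def)
      also have "(\<lambda>x. sig (k + Suc t) (x + Suc t)) ` gset c = (\<lambda>x. sig k x + Suc t) ` gset c"
        by (intro image_cong) (auto simp: sig_def)
      finally show ?thesis by (simp add: image_image)
    qed
    finally show ?thesis by (intro exI[of _ "k + Suc t"]) simp
  qed
qed

theorem corollary4p3:
  fixes m :: nat and \<Delta> :: "nat set set"
  assumes "simplicial_complex m \<Delta>"
  shows "\<forall>d. IncBin (d + 1) (fvec d \<Delta>) \<le> fvec d (IncCx \<Delta>)"
proof
  fix d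
  have sub: "\<forall>F\<in>\<Delta>. F \<subseteq> {1..m}" using assms by (simp add: simplicial_complex_def)
  define Fd where "Fd = faces (Suc d) \<Delta>"
  have FdP: "Fd \<subseteq> Pow {1..m}" using sub by (auto simp: Fd_def faces_def)
  then have fFd: "finite Fd" by (rule finite_subset) simp
  define B where "B = {b. length b = Suc d \<and> gset b \<in> Fd}"
  have imgB: "gset ` B = Fd"
  proof
    show "gset ` B \<subseteq> Fd" by (auto simp: B_def)
    show "Fd \<subseteq> gset ` B"
    proof
      fix u assume uF: "u \<in> Fd"
      then have "u \<subseteq> {1..m}" using FdP by auto
      then have "finite u" "0 \<notin> u" by (auto intro: finite_subset)
      then obtain b where b: "gset b = u" using gset_surj by blast
      have "card u = Suc d" using uF by (simp add: Fd_def faces_def)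
      then have "length b = Suc d" using b card_gset[of b] by simp
      then show "u \<in> gset ` B" using b uF by (auto simp: B_def)
    qed
  qed
  have injg: "inj gset" using gset_inj by (auto intro: injI)
  have injB: "inj_on gset B" using injg by (simp add: inj_on_def inj_def)
  have fB: "finite B" using finite_imageD[of gset B] fFd imgB injB by simp
  have cB: "card B = card Fd" using card_image[OF injB] imgB by simp
  have LB: "\<forall>b\<in>B. length b = Suc d" by (simp add: B_def)
  have core': "card B + K (Suc d) (card B) \<le> card (incL B)" using core[OF fB LB] .
  have incbin: "IncBin (d + 1) (fvec d \<Delta>) = card Fd + K (Suc d) (card Fd)"
    using IncBin_K[of "Suc d" "card Fd"] by (simp add: fvec_def Fd_def)
  have subI: "gset ` incL B \<subseteq> faces (Suc d) (IncCx \<Delta>)"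
  proof
    fix z assume "z \<in> gset ` incL B"
    then obtain b' where b': "b' \<in> incL B" "z = gset b'" by blast
    have lb': "length b' = Suc d" using incL_length[OF LB b'(1)] .
    have "\<exists>u \<pi>. u \<in> Fd \<and> \<pi> \<in> Inc1 \<and> z = \<pi> ` u"
    proof (cases "b' \<in> B")
      case True
      then show ?thesis using b' id_Inc1 by (intro exI[of _ "gset b'"] exI[of _ "\<lambda>x. x"]) (auto simp: B_def)
    next
      case False
      then obtain b i where bi: "b \<in> B" "i < length b" "b' = b[i := Suc (b!i)]"
        using b'(1) unfolding incL_def by blast
      obtain k where "gset b' = sig k ` gset b" using gset_step[OF bi(2)] bi(3) by blast
      then show ?thesis using bi b' sig_Inc1 by (intro exI[of _ "gset b"] exI[of _ "sig k"]) (auto simp: B_def)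
    qed
    then have "z \<in> IncF Fd" unfolding IncF_def by blast
    then have "z \<in> IncCx \<Delta>" unfolding IncCx_def Fd_def by auto
    moreover have "card z = Suc d" using b' lb' card_gset by simp
    ultimately show "z \<in> faces (Suc d) (IncCx \<Delta>)" by (simp add: faces_def)
  qed
  have finI: "finite (faces (Suc d) (IncCx \<Delta>))"
  proof -
    have "IncCx \<Delta> \<subseteq> Pow {..Suc m}"
    proof
      fix z assume "z \<in> IncCx \<Delta>"
      then consider "z = {}" | d' u \<pi> where "u \<in> faces d' \<Delta>" "\<pi> \<in> Inc1" "z = \<pi> ` u"
        unfolding IncCx_def IncF_def by blast
      then show "z \<in> Pow {..Suc m}"
      proof cases
        case 1 then show ?thesis by simp
      next
        case 2
        have "u \<subseteq> {1..m}" using 2 sub by (auto simp: faces_def)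
        moreover have "\<forall>j\<ge>1. \<pi> j \<le> j + 1" using 2 by (simp add: Inc1_def)
        ultimately show ?thesis using 2 by force
      qed
    qed
    then have "finite (IncCx \<Delta>)" by (rule finite_subset) simp
    then show ?thesis by (simp add: faces_def)
  qed
  have injI: "inj_on gset (incL B)" using injg by (simp add: inj_on_def inj_def)
  have "card (incL B) = card (gset ` incL B)" using card_image[OF injI] by simp
  also have "\<dots> \<le> card (faces (Suc d) (IncCx \<Delta>))" using card_mono[OF finI subI] .
  finally have "card (incL B) \<le> fvec d (IncCx \<Delta>)" by (simp add: fvec_def)
  then show "IncBin (d + 1) (fvec d \<Delta>) \<le> fvec d (IncCx \<Delta>)" using incbin core' cB by simp
qed


end
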